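(* Suppose that each of $k_0$ non-defective items and $k_1$ defective items is individually tested $\tilde t$ times (i.e., $\tilde t(k_0+k_1)$ tests in total), where each individual test of an item returns its defectivity status (1 if defective, 0 if not) flipped independently with probability $\rho \in (0,\frac12)$. For any fixed constant $\zeta \in (\rho,1-\rho)$ and any $\delta_0, \delta_1, \epsilon_1 \in (0,1)$, suppose that \[ \tilde t \ge \max\bigg\{ \frac{\log \frac{k_0}{\delta_0}}{ D_2(\zeta \| \rho) }, \frac{\log \frac{1}{\epsilon_1 \delta_1}}{ D_2(\zeta \| 1 - \rho) } \bigg\}. \] Then, if $k_0 = o(k_1)$, for sufficiently large $n$ it holds with probability at least $1-\delta_0-\delta_1$ that the $(1-\epsilon_1)k_1$ items that returned a positive outcome the highest number of times are all defective.
   Context: Logarithms are natural. $D_2(a\|b) = a\log\frac ab + (1-a)\log\frac{1-a}{1-b}$ is the binary relative entropy. The quantities $k_0, k_1$ (and possibly $\delta_0,\delta_1$) may depend on an underlying size parameter $n$, with asymptotics as $n\to\infty$. *)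

theory Defs
  imports "HOL-Probability.Probability" "HOL-Library.Landau_Symbols"
begin

definition D2 :: "real \<Rightarrow> real \<Rightarrow> real" where
  "D2 a b = a * ln (a / b) + (1 - a) * ln ((1 - a) / (1 - b))"

text \<open>Items: Inl i (i < k0) are the non-defective items, Inr j (j < k1) the defective ones.\<close>
definition items :: "nat \<Rightarrow> nat \<Rightarrow> (nat + nat) set" where
  "items k0 k1 = Inl ` {..<k0} \<union> Inr ` {..<k1}"

definition defective :: "nat + nat \<Rightarrow> bool" where
  "defective x = (case x of Inl _ \<Rightarrow> False | Inr _ \<Rightarrow> True)"

text \<open>Each individual test (x, s), s < t, is flipped independently with probability rho:
  omega (x, s) = True means the s-th test of item x was flipped.\<close>
definition flips_pmf :: "nat \<Rightarrow> nat \<Rightarrow> nat \<Rightarrow> real \<Rightarrow> ((nat + nat) \<times> nat \<Rightarrow> bool) pmf" where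
  "flips_pmf k0 k1 t \<rho> = Pi_pmf (items k0 k1 \<times> {..<t}) False (\<lambda>_. bernoulli_pmf \<rho>)"

definition outcome :: "((nat + nat) \<times> nat \<Rightarrow> bool) \<Rightarrow> nat + nat \<Rightarrow> nat \<Rightarrow> bool" where
  "outcome \<omega> x s = (defective x \<noteq> \<omega> (x, s))"

definition poscount :: "nat \<Rightarrow> ((nat + nat) \<times> nat \<Rightarrow> bool) \<Rightarrow> nat + nat \<Rightarrow> nat" where
  "poscount t \<omega> x = card {s \<in> {..<t}. outcome \<omega> x s}"

text \<open>S is a set of m items that returned a positive outcome the highest number of times
  (any admissible tie-breaking).\<close>
definition is_top_set :: "(nat + nat) set \<Rightarrow> (nat + nat \<Rightarrow> nat) \<Rightarrow> nat \<Rightarrow> (nat + nat) set \<Rightarrow> bool" where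
  "is_top_set I c m S \<longleftrightarrow> S \<subseteq> I \<and> card S = m \<and> (\<forall>x\<in>S. \<forall>y\<in>I - S. c y \<le> c x)"

end

theory Submission
  imports Defs
begin

lemma ln_less_minus_one_strict:
  assumes "0 < (x::real)" "x \<noteq> 1" shows "ln x < x - 1"
proof -
  have s: "0 < sqrt x" "sqrt x \<noteq> 1" using assms by auto
  have "ln x = 2 * ln (sqrt x)" using assms by (simp add: ln_sqrt)
  also have "\<dots> \<le> 2 * (sqrt x - 1)" using ln_le_minus_one[OF s(1)] by simp
  also have "\<dots> < x - 1"
  proof -
    have "0 < (sqrt x - 1)^2" using s by simp
    also have "(sqrt x - 1)^2 = x - 2 * sqrt x + 1" using assms by (simp add: power2_diff)
    finally show ?thesis by simp
  qed
  finally show ?thesis .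
qed

lemma D2_pos:
  assumes "0 < a" "a < 1" "0 < b" "b < 1" "a \<noteq> b"
  shows "0 < D2 a b"
proof -
  have 1: "ln (b / a) < b / a - 1" using assms by (intro ln_less_minus_one_strict) auto
  have 2: "ln ((1-b) / (1-a)) \<le> (1-b)/(1-a) - 1" using assms by (intro ln_le_minus_one) auto
  have "a * ln (b/a) < a * (b/a - 1)" using 1 assms by simp
  moreover have "(1-a) * ln ((1-b)/(1-a)) \<le> (1-a) * ((1-b)/(1-a) - 1)" using 2 assms
    by (intro mult_left_mono) auto
  moreover have "a * (b/a - 1) + (1-a) * ((1-b)/(1-a) - 1) = 0" using assms
    by (simp add: field_simps)
  moreover have "ln (b/a) = - ln (a/b)" "ln ((1-b)/(1-a)) = - ln ((1-a)/(1-b))"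
    using assms by (simp_all add: ln_div)
  ultimately have "0 < a * (- ln (b/a)) + (1-a) * (- ln ((1-b)/(1-a)))" by linarith
  moreover have "ln (a/b) = - ln (b/a)" "ln ((1-a)/(1-b)) = - ln ((1-b)/(1-a))"
    using assms by (simp_all add: ln_div)
  ultimately show ?thesis unfolding D2_def by simp
qed

lemma D2_swap: "D2 a (1 - b) = D2 (1 - a) b"
  unfolding D2_def by simp

lemma chernoff:
  assumes p: "0 < p" "p \<le> a" "a < 1"
  shows "measure_pmf.prob (binomial_pmf t p) {k. a * real t \<le> real k} \<le> exp (- real t * D2 a p)"
proof -
  define q where "q = 1 - p"
  define r where "r = a * q / (p * (1 - a))"
  have q: "0 < q" using p unfolding q_def by simp
  have r1: "1 \<le> r" unfolding r_def q_def using p by (simp add: field_simps)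
  define K where "K = {k \<in> {..t}. a * real t \<le> real k}"
  have "measure_pmf.prob (binomial_pmf t p) {k. a * real t \<le> real k}
      = measure_pmf.prob (binomial_pmf t p) ({k. a * real t \<le> real k} \<inter> set_pmf (binomial_pmf t p))"
    by (simp add: measure_Int_set_pmf)
  also have "{k. a * real t \<le> real k} \<inter> set_pmf (binomial_pmf t p) = K"
    using p unfolding K_def by (auto simp: set_pmf_binomial_eq)
  also have "measure_pmf.prob (binomial_pmf t p) K = (\<Sum>k\<in>K. real (t choose k) * p ^ k * q ^ (t - k))"
    unfolding K_def q_def using p by (subst measure_measure_pmf_finite) (auto simp: pmf_binomial)
  also have "\<dots> \<le> (\<Sum>k\<in>K. real (t choose k) * p ^ k * q ^ (t - k) * r ^ k / r powr (a * t))"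
  proof (intro sum_mono)
    fix k assume k: "k \<in> K"
    have "r powr (a * t) \<le> r powr (real k)" using k r1 unfolding K_def by (intro powr_mono) auto
    also have "\<dots> = r ^ k" using r1 by (simp add: powr_realpow)
    finally have "1 \<le> r ^ k / r powr (a * t)" using r1 by simp
    then show "real (t choose k) * p ^ k * q ^ (t - k) \<le> real (t choose k) * p ^ k * q ^ (t - k) * r ^ k / r powr (a * t)"
      using p q by (metis mult.commute mult_le_cancel_left1 times_divide_eq_right zero_le_mult_iff
          mult_nonneg_nonneg of_nat_0_le_iff zero_le_power less_imp_le linorder_not_le)
  qed
  also have "\<dots> \<le> (\<Sum>k\<le>t. real (t choose k) * p ^ k * q ^ (t - k) * r ^ k / r powr (a * t))"
    using p q r1 unfolding K_def by (intro sum_mono2) auto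
  also have "\<dots> = (\<Sum>k\<le>t. real (t choose k) * (p * r) ^ k * q ^ (t - k)) / r powr (a * t)"
    by (simp add: sum_divide_distrib power_mult_distrib algebra_simps)
  also have "\<dots> = (p * r + q) ^ t / r powr (a * t)"
    by (simp add: binomial_ring)
  also have "p * r + q = q / (1 - a)" unfolding r_def using p q by (simp add: field_simps)
  also have "(q / (1 - a)) ^ t / r powr (a * t) = exp (- real t * D2 a p)"
  proof -
    have "(q / (1 - a)) ^ t = exp (real t * (ln q - ln (1 - a)))"
    proof -
      have "q / (1 - a) = exp (ln q - ln (1 - a))" using q p by (simp add: exp_diff)
      then show ?thesis by (simp add: exp_of_nat_mult)
    qed
    moreover have "r powr (a * t) = exp (a * t * (ln a + ln q - ln p - ln (1 - a)))"
    proof -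
      have "ln r = ln (a * q) - ln (p * (1 - a))" unfolding r_def using p q by (simp add: ln_div)
      also have "\<dots> = ln a + ln q - ln p - ln (1 - a)" using p q by (simp add: ln_mult)
      finally show ?thesis unfolding powr_def using r1 by simp
    qed
    moreover have "D2 a p = a * (ln a - ln p) + (1 - a) * (ln (1 - a) - ln q)"
      unfolding D2_def q_def using p by (simp add: ln_div)
    then have "real t * (ln q - ln (1 - a)) - a * t * (ln a + ln q - ln p - ln (1 - a)) = - real t * D2 a p"
      by (simp only: right_diff_distrib left_diff_distrib distrib_left distrib_right mult_minus_left) (simp add: algebra_simps)
    ultimately show ?thesis by (simp add: exp_diff[symmetric])
  qed
  finally show ?thesis .
qed
lemma finite_items: "finite (items k0 k1)"
  unfolding items_def by auto

lemma flips_count_dist: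
  assumes x: "x \<in> items k0 k1" and p: "0 \<le> p" "p \<le> 1"
  shows "map_pmf (\<lambda>\<omega>. card {s\<in>{..<t}. \<omega> (x, s)}) (flips_pmf k0 k1 t p) = binomial_pmf t p"
proof -
  define A where "A = {x} \<times> {..<t}"
  have finA: "finite A" and cardA: "card A = t" unfolding A_def by (auto simp: card_cartesian_product)
  have sub: "A \<subseteq> items k0 k1 \<times> {..<t}" using x unfolding A_def by auto
  have "binomial_pmf t p = map_pmf (\<lambda>f. card {y\<in>A. f y}) (Pi_pmf A False (\<lambda>_. bernoulli_pmf p))"
    using finA cardA p by (intro binomial_pmf_altdef') auto
  also have "Pi_pmf A False (\<lambda>_. bernoulli_pmf p) =
      map_pmf (\<lambda>f y. if y \<in> A then f y else False) (flips_pmf k0 k1 t p)"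
    unfolding flips_pmf_def using sub finite_items by (intro Pi_pmf_subset) auto
  also have "map_pmf (\<lambda>f. card {y\<in>A. f y}) \<dots> = map_pmf (\<lambda>\<omega>. card {y\<in>A. \<omega> y}) (flips_pmf k0 k1 t p)"
    unfolding pmf.map_comp o_def by (intro pmf.map_cong refl arg_cong[where f=card]) auto
  also have "(\<lambda>\<omega>. card {y\<in>A. \<omega> y}) = (\<lambda>\<omega>. card {s\<in>{..<t}. \<omega> (x, s)})"
  proof
    fix \<omega> :: "(nat + nat) \<times> nat \<Rightarrow> bool"
    have "{y\<in>A. \<omega> y} = (\<lambda>s. (x, s)) ` {s\<in>{..<t}. \<omega> (x, s)}" unfolding A_def by auto
    moreover have "inj (\<lambda>s. (x, s))" by (auto intro: injI)
    ultimately show "card {y\<in>A. \<omega> y} = card {s\<in>{..<t}. \<omega> (x, s)}"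
      by (simp add: card_image inj_on_def)
  qed
  finally show ?thesis by simp
qed

lemma prob_nondef:
  assumes i: "i < k0" and p: "0 < p" "p \<le> a" "a < 1"
  shows "measure_pmf.prob (flips_pmf k0 k1 t p) {\<omega>. a * real t \<le> real (poscount t \<omega> (Inl i))}
     \<le> exp (- real t * D2 a p)"
proof -
  have x: "Inl i \<in> items k0 k1" using i unfolding items_def by auto
  have "{\<omega>. a * real t \<le> real (poscount t \<omega> (Inl i))} =
     (\<lambda>\<omega>. card {s\<in>{..<t}. \<omega> (Inl i, s)}) -` {k. a * real t \<le> real k}"
    by (simp add: poscount_def outcome_def defective_def)
  then have "measure_pmf.prob (flips_pmf k0 k1 t p) {\<omega>. a * real t \<le> real (poscount t \<omega> (Inl i))}
     = measure_pmf.prob (map_pmf (\<lambda>\<omega>. card {s\<in>{..<t}. \<omega> (Inl i, s)}) (flips_pmf k0 k1 t p)) {k. a * real t \<le> real k}"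
    by (simp add: measure_map_pmf)
  also have "\<dots> = measure_pmf.prob (binomial_pmf t p) {k. a * real t \<le> real k}"
    using x p by (subst flips_count_dist) auto
  also have "\<dots> \<le> exp (- real t * D2 a p)" using p by (intro chernoff) auto
  finally show ?thesis .
qed

lemma prob_def:
  assumes j: "j < k1" and p: "0 < p" "p \<le> 1 - z" "0 < z"
  shows "measure_pmf.prob (flips_pmf k0 k1 t p) {\<omega>. real (poscount t \<omega> (Inr j)) \<le> z * real t}
     \<le> exp (- real t * D2 z (1 - p))"
proof -
  have x: "Inr j \<in> items k0 k1" using j unfolding items_def by auto
  have cnt: "card {s\<in>{..<t}. \<not> \<omega> (Inr j, s)} = t - card {s\<in>{..<t}. \<omega> (Inr j, s)}" for \<omega>
  proof -
    have "{s\<in>{..<t}. \<not> \<omega> (Inr j, s)} = {..<t} - {s\<in>{..<t}. \<omega> (Inr j, s)}" by auto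
    moreover have "card ({..<t} - {s\<in>{..<t}. \<omega> (Inr j, s)}) = t - card {s\<in>{..<t}. \<omega> (Inr j, s)}"
      by (subst card_Diff_subset) auto
    ultimately show ?thesis by simp
  qed
  have le: "card {s\<in>{..<t}. \<omega> (Inr j, s)} \<le> t" for \<omega>
    by (rule order.trans[OF card_mono[of "{..<t}"]]) auto
  have "{\<omega>. real (poscount t \<omega> (Inr j)) \<le> z * real t} =
     (\<lambda>\<omega>. card {s\<in>{..<t}. \<omega> (Inr j, s)}) -` {k. (1 - z) * real t \<le> real k}"
  proof -
    have eq: "real (poscount t \<omega> (Inr j)) = real t - real (card {s\<in>{..<t}. \<omega> (Inr j, s)})" for \<omega>
      unfolding poscount_def outcome_def defective_def using cnt[of \<omega>] le[of \<omega>] by (simp add: of_nat_diff)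
    show ?thesis
    proof (rule set_eqI)
      fix \<omega>
      show "\<omega> \<in> {\<omega>. real (poscount t \<omega> (Inr j)) \<le> z * real t} \<longleftrightarrow>
        \<omega> \<in> (\<lambda>\<omega>. card {s\<in>{..<t}. \<omega> (Inr j, s)}) -` {k. (1 - z) * real t \<le> real k}"
        using eq[of \<omega>] by (simp add: algebra_simps) linarith
    qed
  qed
  then have "measure_pmf.prob (flips_pmf k0 k1 t p) {\<omega>. real (poscount t \<omega> (Inr j)) \<le> z * real t}
     = measure_pmf.prob (map_pmf (\<lambda>\<omega>. card {s\<in>{..<t}. \<omega> (Inr j, s)}) (flips_pmf k0 k1 t p)) {k. (1 - z) * real t \<le> real k}"
    by (simp add: measure_map_pmf)
  also have "\<dots> = measure_pmf.prob (binomial_pmf t p) {k. (1 - z) * real t \<le> real k}"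
    using x p by (subst flips_count_dist) auto
  also have "\<dots> \<le> exp (- real t * D2 (1 - z) p)" using p by (intro chernoff) auto
  also have "D2 (1 - z) p = D2 z (1 - p)" by (simp add: D2_swap)
  finally show ?thesis .
qed


lemma main:
  fixes k0 k1 t :: nat and \<delta>0 \<delta>1 \<rho> \<zeta> \<epsilon>1 :: real
  assumes rho: "0 < \<rho>" "\<rho> < 1/2"
    and zeta: "\<rho> < \<zeta>" "\<zeta> < 1 - \<rho>"
    and d0: "0 < \<delta>0" "\<delta>0 < 1" and d1: "0 < \<delta>1" "\<delta>1 < 1"
    and eps: "0 < \<epsilon>1" "\<epsilon>1 < 1"
    and t_ge: "real t \<ge> max (ln (real k0 / \<delta>0) / D2 \<zeta> \<rho>)
                                     (ln (1 / (\<epsilon>1 * \<delta>1)) / D2 \<zeta> (1 - \<rho>))"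
  shows "measure_pmf.prob (flips_pmf k0 k1 t \<rho>)
             {\<omega>. \<forall>S. is_top_set (items k0 k1) (poscount t \<omega>)
                          (nat \<lfloor>(1 - \<epsilon>1) * real k1\<rfloor>) S
                       \<longrightarrow> (\<forall>x\<in>S. defective x)}
           \<ge> 1 - \<delta>0 - \<delta>1"
proof -
  define M where "M = flips_pmf k0 k1 t \<rho>"
  define m where "m = nat \<lfloor>(1 - \<epsilon>1) * real k1\<rfloor>"
  define Goal where "Goal = {\<omega>. \<forall>S. is_top_set (items k0 k1) (poscount t \<omega>) m S \<longrightarrow> (\<forall>x\<in>S. defective x)}"
  define A where "A = (\<lambda>i. {\<omega>. \<zeta> * real t \<le> real (poscount t \<omega> (Inl i))})"
  define B where "B = (\<lambda>j. {\<omega>. real (poscount t \<omega> (Inr j)) \<le> \<zeta> * real t})"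
  define nb where "nb = (\<lambda>\<omega>. \<Sum>j<k1. indicator (B j) \<omega> :: real)"
  define E0 where "E0 = (\<Union>i\<in>{..<k0}. A i)"
  define E1 where "E1 = {\<omega>. \<epsilon>1 * real k1 \<le> nb \<omega>}"
  have D0pos: "0 < D2 \<zeta> \<rho>" using rho zeta by (intro D2_pos) auto
  have D1pos: "0 < D2 \<zeta> (1 - \<rho>)" using rho zeta by (intro D2_pos) auto
  have nb_card: "nb \<omega> = real (card {j\<in>{..<k1}. \<omega> \<in> B j})" for \<omega>
  proof -
    have "nb \<omega> = (\<Sum>j\<in>{j\<in>{..<k1}. \<omega> \<in> B j}. 1)"
      unfolding nb_def by (rule sum.mono_neutral_cong_right) (auto simp: indicator_def)
    then show ?thesis by simp
  qed
  show ?thesis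
  proof (cases "k1 = 0")
    case True
    have "Goal = UNIV"
    proof -
      { fix \<omega> S assume "is_top_set (items k0 k1) (poscount t \<omega>) m S"
        then have "S \<subseteq> items k0 k1" "card S = 0" using True unfolding is_top_set_def m_def by auto
        then have "S = {}" using finite_items[of k0 k1] by (auto dest: finite_subset) }
      then show ?thesis unfolding Goal_def by auto
    qed
    then show ?thesis using d0 d1 unfolding m_def Goal_def by simp
  next
    case False
    then have k1pos: "0 < real k1" by simp
    have sub: "- (E0 \<union> E1) \<subseteq> Goal"
    proof
      fix \<omega> assume \<omega>: "\<omega> \<in> - (E0 \<union> E1)"
      let ?c = "poscount t \<omega>"
      show "\<omega> \<in> Goal" unfolding Goal_def
      proof (intro CollectI allI impI ballI)
        fix S x assume top: "is_top_set (items k0 k1) ?c m S" and x: "x \<in> S"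
        show "defective x"
        proof (rule ccontr)
          assume nd: "\<not> defective x"
          have SI: "S \<subseteq> items k0 k1" and cS: "card S = m"
            and dom: "\<forall>x\<in>S. \<forall>y\<in>items k0 k1 - S. ?c y \<le> ?c x" using top unfolding is_top_set_def by auto
          have finS: "finite S" using SI finite_items by (rule finite_subset)
          obtain i where xi: "x = Inl i" and i: "i < k0"
            using nd x SI unfolding items_def defective_def by auto
          have cx: "real (?c x) < \<zeta> * real t" using \<omega> i xi unfolding E0_def A_def by (auto simp: not_le)
          define Good :: "(nat + nat) set" where "Good = Inr ` {j\<in>{..<k1}. \<omega> \<notin> B j}"
          have "Good \<subseteq> S"
          proof
            fix y assume y: "y \<in> Good"
            then obtain j where yj: "y = Inr j" "j < k1" "\<omega> \<notin> B j" unfolding Good_def by auto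
            have "y \<in> items k0 k1" using yj unfolding items_def by auto
            moreover have "real (?c y) > \<zeta> * real t" using yj unfolding B_def by auto
            ultimately show "y \<in> S" using dom x cx by force
          qed
          moreover have "x \<notin> Good" using xi unfolding Good_def by auto
          ultimately have "insert x Good \<subseteq> S" using x by auto
          then have "card (insert x Good) \<le> m" using finS cS card_mono by metis
          moreover have "finite Good" unfolding Good_def by auto
          ultimately have cG: "card Good + 1 \<le> m" using \<open>x \<notin> Good\<close> by simp
          have "card Good = card {j\<in>{..<k1}. \<omega> \<notin> B j}" unfolding Good_def
            by (rule card_image) (auto simp: inj_on_def)
          also have "{j\<in>{..<k1}. \<omega> \<notin> B j} = {..<k1} - {j\<in>{..<k1}. \<omega> \<in> B j}" by auto
          also have "card \<dots> = k1 - card {j\<in>{..<k1}. \<omega> \<in> B j}" by (subst card_Diff_subset) auto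
          finally have cG2: "card Good = k1 - card {j\<in>{..<k1}. \<omega> \<in> B j}" .
          have cb: "card {j\<in>{..<k1}. \<omega> \<in> B j} \<le> k1"
            by (rule order.trans[OF card_mono[of "{..<k1}"]]) auto
          have "nb \<omega> < \<epsilon>1 * real k1" using \<omega> unfolding E1_def by auto
          then have "real (card {j\<in>{..<k1}. \<omega> \<in> B j}) < \<epsilon>1 * real k1" by (simp add: nb_card)
          then have "real (card Good) > (1 - \<epsilon>1) * real k1" using cG2 cb by (simp add: of_nat_diff algebra_simps)
          moreover have "real m \<le> (1 - \<epsilon>1) * real k1" unfolding m_def using eps
            by (simp add: of_nat_nat)
          ultimately show False using cG by linarith
        qed
      qed
    qed
    have PE0: "measure_pmf.prob M E0 \<le> \<delta>0"
    proof (cases "k0 = 0")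
      case True then show ?thesis unfolding E0_def using d0 by simp
    next
      case False
      have "measure_pmf.prob M E0 \<le> (\<Sum>i<k0. measure_pmf.prob M (A i))"
        unfolding E0_def by (rule measure_pmf.finite_measure_subadditive_finite) auto
      also have "\<dots> \<le> (\<Sum>i<k0. exp (- real t * D2 \<zeta> \<rho>))"
        unfolding M_def A_def using rho zeta by (intro sum_mono prob_nondef) auto
      also have "\<dots> = real k0 * exp (- real t * D2 \<zeta> \<rho>)" by simp
      also have "\<dots> \<le> real k0 * (\<delta>0 / real k0)"
      proof -
        have "ln (real k0 / \<delta>0) \<le> real t * D2 \<zeta> \<rho>" using t_ge D0pos
          by (simp add: pos_divide_le_eq)
        then have "exp (- real t * D2 \<zeta> \<rho>) \<le> exp (- ln (real k0 / \<delta>0))" by simp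
        also have "\<dots> = \<delta>0 / real k0" using False d0 by (simp add: exp_minus ln_div exp_diff)
        finally show ?thesis by (rule mult_left_mono) simp
      qed
      also have "\<dots> = \<delta>0" using False by simp
      finally show ?thesis .
    qed
    have PE1: "measure_pmf.prob M E1 \<le> \<delta>1"
    proof -
      have int: "integrable M nb" unfolding nb_def
        by (rule Bochner_Integration.integrable_sum)
          (auto simp: integrable_indicator_iff intro: measure_pmf.emeasure_finite[THEN top.not_eq_extremum[THEN iffD1]])
      have "measure_pmf.prob M E1 = measure M {\<omega>\<in>space M. \<epsilon>1 * real k1 \<le> nb \<omega>}"
        unfolding E1_def by simp
      also have "\<dots> \<le> (\<integral>\<omega>. nb \<omega> \<partial>M) / (\<epsilon>1 * real k1)"
        using int eps k1pos by (intro integral_Markov_inequality_measure[where A = UNIV])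
          (auto simp: nb_def intro!: sum_nonneg)
      also have "(\<integral>\<omega>. nb \<omega> \<partial>M) = (\<Sum>j<k1. measure_pmf.prob M (B j))"
        unfolding nb_def by (subst Bochner_Integration.integral_sum) (auto simp: integrable_indicator_iff intro: measure_pmf.emeasure_finite[THEN top.not_eq_extremum[THEN iffD1]])
      also have "\<dots> \<le> (\<Sum>j<k1. exp (- real t * D2 \<zeta> (1 - \<rho>)))"
        unfolding M_def B_def using rho zeta by (intro sum_mono prob_def) auto
      also have "\<dots> = real k1 * exp (- real t * D2 \<zeta> (1 - \<rho>))" by simp
      also have "\<dots> \<le> real k1 * (\<epsilon>1 * \<delta>1)"
      proof -
        have "ln (1 / (\<epsilon>1 * \<delta>1)) \<le> real t * D2 \<zeta> (1 - \<rho>)" using t_ge D1pos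
          by (simp add: pos_divide_le_eq)
        then have "exp (- real t * D2 \<zeta> (1 - \<rho>)) \<le> exp (- ln (1 / (\<epsilon>1 * \<delta>1)))" by simp
        also have "\<dots> = \<epsilon>1 * \<delta>1" using eps d1 by (simp add: exp_minus ln_div exp_diff)
        finally show ?thesis using k1pos by simp
      qed
      finally show ?thesis using k1pos eps by (simp add: field_simps)
    qed
    have "measure_pmf.prob M Goal \<ge> measure_pmf.prob M (- (E0 \<union> E1))"
      using sub by (intro measure_pmf.finite_measure_mono) auto
    moreover have "measure_pmf.prob M (- (E0 \<union> E1)) = 1 - measure_pmf.prob M (E0 \<union> E1)"
      using measure_pmf.prob_compl[of "E0 \<union> E1" M] by (simp add: Compl_eq_Diff_UNIV)
    moreover have "measure_pmf.prob M (E0 \<union> E1) \<le> measure_pmf.prob M E0 + measure_pmf.prob M E1"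
      by (rule measure_subadditive) (auto simp: measure_pmf.emeasure_finite)
    ultimately show ?thesis using PE0 PE1 unfolding M_def Goal_def m_def by linarith
  qed
qed

theorem lemma5:
  fixes k0 k1 t :: "nat \<Rightarrow> nat"
    and \<delta>0 \<delta>1 :: "nat \<Rightarrow> real"
    and \<rho> \<zeta> \<epsilon>1 :: real
  assumes rho: "0 < \<rho>" "\<rho> < 1/2"
    and zeta: "\<rho> < \<zeta>" "\<zeta> < 1 - \<rho>"
    and delta: "\<And>n. 0 < \<delta>0 n \<and> \<delta>0 n < 1" "\<And>n. 0 < \<delta>1 n \<and> \<delta>1 n < 1"
    and eps: "0 < \<epsilon>1" "\<epsilon>1 < 1"
    and t_ge: "\<And>n. real (t n) \<ge> max (ln (real (k0 n) / \<delta>0 n) / D2 \<zeta> \<rho>)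
                                     (ln (1 / (\<epsilon>1 * \<delta>1 n)) / D2 \<zeta> (1 - \<rho>))"
    and small: "(\<lambda>n. real (k0 n)) \<in> o(\<lambda>n. real (k1 n))"
  shows "\<forall>\<^sub>F n in at_top.
           measure_pmf.prob (flips_pmf (k0 n) (k1 n) (t n) \<rho>)
             {\<omega>. \<forall>S. is_top_set (items (k0 n) (k1 n)) (poscount (t n) \<omega>)
                          (nat \<lfloor>(1 - \<epsilon>1) * real (k1 n)\<rfloor>) S
                       \<longrightarrow> (\<forall>x\<in>S. defective x)}
           \<ge> 1 - \<delta>0 n - \<delta>1 n"
  proof (rule always_eventually, rule allI)
  fix n
  show "measure_pmf.prob (flips_pmf (k0 n) (k1 n) (t n) \<rho>)
             {\<omega>. \<forall>S. is_top_set (items (k0 n) (k1 n)) (poscount (t n) \<omega>)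
                          (nat \<lfloor>(1 - \<epsilon>1) * real (k1 n)\<rfloor>) S
                       \<longrightarrow> (\<forall>x\<in>S. defective x)}
           \<ge> 1 - \<delta>0 n - \<delta>1 n"
    using delta[of n] rho zeta eps t_ge[of n] by (intro main) auto
qed

end
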